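(* Let $G=(V,E)$ be an undirected graph with positive edge weights, and let $p,v\in V$ be distinct. If a minimum $p,v$-cut $S$ with $v\in S$ (and $p\notin S$) satisfies $|E(\{p\},S)|>0.6\deg(p)$, then for all $v'\in (V\setminus S)\setminus\{p\}$ we have $\lambda_{p,v'}\le 0.8\,\lambda_{p,v}$.
   Context: $|E(A,B)|$ is the total weight of edges between node sets $A$ and $B$; $\deg(u)$ is the total weight of edges incident to $u$; $\lambda_{x,y}$ denotes the value (total weight of crossing edges) of a minimum $x,y$-cut in $G$. *)

theory Defs
  imports Complex_Main
begin

text \<open>A weighted undirected graph on a finite vertex set V is given by a weight
function w with w x y = w y x, no loops, and w x y \<ge> 0; the edges are the
pairs with w x y > 0 (positive weights), non-edges have weight 0.\<close>

definition wgraph :: "'a set \<Rightarrow> ('a \<Rightarrow> 'a \<Rightarrow> real) \<Rightarrow> bool" where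
  "wgraph V w \<longleftrightarrow> finite V \<and> (\<forall>x y. w x y = w y x) \<and> (\<forall>x. w x x = 0)
     \<and> (\<forall>x y. w x y \<ge> 0) \<and> (\<forall>x y. w x y \<noteq> 0 \<longrightarrow> x \<in> V \<and> y \<in> V)"

definition cut_weight :: "('a \<Rightarrow> 'a \<Rightarrow> real) \<Rightarrow> 'a set \<Rightarrow> 'a set \<Rightarrow> real" where
  "cut_weight w A B = (\<Sum>a\<in>A. \<Sum>b\<in>B. w a b)"

definition wdeg :: "'a set \<Rightarrow> ('a \<Rightarrow> 'a \<Rightarrow> real) \<Rightarrow> 'a \<Rightarrow> real" where
  "wdeg V w u = (\<Sum>x\<in>V. w u x)"

definition is_cut :: "'a set \<Rightarrow> 'a \<Rightarrow> 'a \<Rightarrow> 'a set \<Rightarrow> bool" where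
  "is_cut V x y S \<longleftrightarrow> S \<subseteq> V \<and> y \<in> S \<and> x \<notin> S"

definition cut_value :: "'a set \<Rightarrow> ('a \<Rightarrow> 'a \<Rightarrow> real) \<Rightarrow> 'a set \<Rightarrow> real" where
  "cut_value V w S = cut_weight w S (V - S)"

definition min_cut_val :: "'a set \<Rightarrow> ('a \<Rightarrow> 'a \<Rightarrow> real) \<Rightarrow> 'a \<Rightarrow> 'a \<Rightarrow> real" where
  "min_cut_val V w x y = Min (cut_value V w ` {S. is_cut V x y S})"

definition is_min_cut :: "'a set \<Rightarrow> ('a \<Rightarrow> 'a \<Rightarrow> real) \<Rightarrow> 'a \<Rightarrow> 'a \<Rightarrow> 'a set \<Rightarrow> bool" where
  "is_min_cut V w x y S \<longleftrightarrow> is_cut V x y S \<and>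
     (\<forall>T. is_cut V x y T \<longrightarrow> cut_value V w S \<le> cut_value V w T)"

end

theory Submission
  imports Defs
begin

lemma minval_eq:
  assumes "finite V" "is_min_cut V w x y S"
  shows "min_cut_val V w x y = cut_value V w S"
proof -
  have fin: "finite (cut_value V w ` {S. is_cut V x y S})"
    using assms(1) by (auto simp: is_cut_def intro!: finite_imageI rev_finite_subset[of "Pow V"])
  have "S \<in> {S. is_cut V x y S}" using assms(2) by (simp add: is_min_cut_def)
  then show ?thesis unfolding min_cut_val_def
    using assms(2) fin by (intro Min_eqI) (auto simp: is_min_cut_def)
qed

lemma minval_le:
  assumes "finite V" "is_cut V x y T"
  shows "min_cut_val V w x y \<le> cut_value V w T"
proof -
  have fin: "finite (cut_value V w ` {S. is_cut V x y S})"
    using assms(1) by (auto simp: is_cut_def intro!: finite_imageI rev_finite_subset[of "Pow V"])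
  then show ?thesis unfolding min_cut_val_def using assms(2) by (intro Min_le) auto
qed

theorem lemma4p5:
  fixes V :: "'a set" and w :: "'a \<Rightarrow> 'a \<Rightarrow> real" and p v :: 'a and S :: "'a set"
  assumes "wgraph V w"
    and "p \<in> V" and "v \<in> V" and "p \<noteq> v"
    and "is_min_cut V w p v S"
    and "cut_weight w {p} S > 0.6 * wdeg V w p"
  shows "\<forall>v' \<in> (V - S) - {p}. min_cut_val V w p v' \<le> 0.8 * min_cut_val V w p v"
proof
  fix v' assume v': "v' \<in> (V - S) - {p}"
  define T where "T = V - S - {p}"
  have finV: "finite V" and sym: "\<And>x y. w x y = w y x" and wpp: "w p p = 0"
    using assms(1) by (auto simp: wgraph_def)
  have SV: "S \<subseteq> V" and pS: "p \<notin> S" and vS: "v \<in> S" using assms(5) by (auto simp: is_min_cut_def is_cut_def)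
  have finS: "finite S" using SV finV finite_subset by blast
  have finT: "finite T" using finV T_def by simp
  have pT: "p \<notin> T" and ST: "S \<inter> T = {}" by (auto simp: T_def)
  have VS: "V - S = insert p T" using assms(2) pS by (auto simp: T_def)
  have VT: "V - T = insert p S" using assms(2) SV by (auto simp: T_def)
  have VSplit: "V = insert p (S \<union> T)" using assms(2) SV by (auto simp: T_def)
  define a where "a = (\<Sum>x\<in>S. w x p)"
  define b where "b = (\<Sum>x\<in>T. w x p)"
  define c where "c = (\<Sum>x\<in>S. \<Sum>y\<in>T. w x y)"
  have lam: "min_cut_val V w p v = a + c"
  proof -
    have "min_cut_val V w p v = cut_value V w S" by (rule minval_eq[OF finV assms(5)])
    also have "\<dots> = (\<Sum>x\<in>S. w x p + (\<Sum>y\<in>T. w x y))"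
      unfolding cut_value_def cut_weight_def VS using finT pT by (simp)
    also have "\<dots> = a + c" by (simp add: a_def c_def sum.distrib)
    finally show ?thesis .
  qed
  have ca: "cut_weight w {p} S = a" unfolding cut_weight_def a_def by (simp, rule sum.cong[OF refl], rule sym)
  have dg: "wdeg V w p = a + b"
  proof -
    have "wdeg V w p = w p p + (\<Sum>x\<in>S \<union> T. w p x)"
      unfolding wdeg_def VSplit using finS finT pS pT by (subst sum.insert) auto
    also have "\<dots> = (\<Sum>x\<in>S. w p x) + (\<Sum>x\<in>T. w p x)" using wpp finS finT ST by (simp add: sum.union_disjoint)
    also have "(\<Sum>x\<in>S. w p x) = a" unfolding a_def by (rule sum.cong[OF refl], rule sym)
    also have "(\<Sum>x\<in>T. w p x) = b" unfolding b_def by (rule sum.cong[OF refl], rule sym)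
    finally show ?thesis .
  qed
  have cT: "cut_value V w T = b + c"
  proof -
    have "cut_value V w T = (\<Sum>x\<in>T. w x p + (\<Sum>y\<in>S. w x y))"
      unfolding cut_value_def cut_weight_def VT using finS pS by simp
    also have "\<dots> = b + (\<Sum>x\<in>T. \<Sum>y\<in>S. w x y)" by (simp add: b_def sum.distrib)
    also have "(\<Sum>x\<in>T. \<Sum>y\<in>S. w x y) = c" unfolding c_def
      by (subst sum.swap) (rule sum.cong[OF refl], rule sum.cong[OF refl], rule sym)
    finally show ?thesis .
  qed
  have cutT: "is_cut V p v' T" using v' by (auto simp: is_cut_def T_def)
  have cutVp: "is_cut V p v (V - {p})" using assms by (auto simp: is_cut_def)
  have cVp: "cut_value V w (V - {p}) = a + b"
  proof -
    have "V - (V - {p}) = {p}" using assms(2) by auto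
    then have "cut_value V w (V - {p}) = (\<Sum>x\<in>V - {p}. w x p)"
      unfolding cut_value_def cut_weight_def by simp
    also have "\<dots> = (\<Sum>x\<in>V - {p}. w p x)" by (rule sum.cong[OF refl], rule sym)
    also have "\<dots> = wdeg V w p" unfolding wdeg_def using finV assms(2) wpp
      by (simp add: sum.remove)
    finally show ?thesis using dg by simp
  qed
  have le1: "a + c \<le> a + b"
  proof -
    have "cut_value V w S \<le> cut_value V w (V - {p})" using assms(5) cutVp unfolding is_min_cut_def by blast
    then show ?thesis using cVp lam minval_eq[OF finV assms(5)] by simp
  qed
  have "min_cut_val V w p v' \<le> b + c" using minval_le[OF finV cutT, of w] cT by simp
  moreover have "a > 0.6 * (a + b)" using assms(6) ca dg by simp
  ultimately show "min_cut_val V w p v' \<le> 0.8 * min_cut_val V w p v" using lam le1 by (simp add: field_simps)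
qed

end
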